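(* For any two relatively prime integers $m,n\ge2$, \[\operatorname{spec}(U_m)\cap\operatorname{spec}(U_n)=\{0,1,-1\},\] where $\operatorname{spec}(U_q)$ is the set of $\lambda\in\mathbb{R}$ such that $U_qf=\lambda f$ for some nonzero $f\in\mathcal{R}$.
   Context: $\mathcal{R}$ denotes the real vector space of rational functions $f(x)=A(x)/B(x)$ with $A,B\in\mathbb{R}[x]$, $B(0)\neq 0$ and $\deg A<\deg B$. For $f$ with Taylor expansion $f(x)=\sum_{n\ge0}a_nx^n$ at $0$ and a positive integer $q$, $U_qf(x)=\sum_{n\ge 0}a_{qn}x^n$. *)

theory Defs
  imports "HOL-Computational_Algebra.Computational_Algebra"
begin

text \<open>Elements of the space R are identified with their Taylor expansions at 0
  (a rational function with B(0) nonzero is determined by its Taylor series).\<close>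

definition ratfun_space :: "real fps set" where
  "ratfun_space = {fps_of_poly A / fps_of_poly B | A B.
      poly B 0 \<noteq> 0 \<and> degree A < degree B}"

definition U_op :: "nat \<Rightarrow> real fps \<Rightarrow> real fps" where
  "U_op q f = Abs_fps (\<lambda>n. fps_nth f (q * n))"

definition spec_U :: "nat \<Rightarrow> real set" where
  "spec_U q = {c. \<exists>f \<in> ratfun_space. f \<noteq> 0 \<and> U_op q f = fps_const c * f}"

end

theory Submission
  imports Defs "HOL-Number_Theory.Cong" "HOL-Computational_Algebra.Field_as_Ring"
begin

lemma fps_eq_poly_div:
  fixes f :: "'a::field fps"
  assumes "f * fps_of_poly B = fps_of_poly A" "poly B 0 \<noteq> 0"
  shows "f = fps_of_poly A / fps_of_poly B"
proof -
  have B0: "fps_of_poly B $ 0 \<noteq> 0" using assms(2) by (simp add: poly_0_coeff_0)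
  have "fps_of_poly A / fps_of_poly B = f * fps_of_poly B * inverse (fps_of_poly B)"
    using assms(1) fps_divide_unit[OF B0] by simp
  also have "\<dots> = f" using B0 by (simp add: mult.assoc inverse_mult_eq_1')
  finally show ?thesis by simp
qed

lemma periodic_in_space:
  fixes a :: "nat \<Rightarrow> real"
  assumes N: "N \<ge> 1" and per: "\<And>k. a (k + N) = a k"
  shows "Abs_fps a \<in> ratfun_space"
proof -
  define A where "A = (\<Sum>j<N. monom (a j) j)"
  define B :: "real poly" where "B = 1 - monom 1 N"
  have cA: "coeff A k = (if k < N then a k else 0)" for k
    unfolding A_def by (simp add: coeff_sum)
  have degA: "degree A < N"
  proof (cases "A = 0")
    case True then show ?thesis using N by simp
  next
    case False
    have "coeff A (degree A) \<noteq> 0" using False by simp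
    then show ?thesis using cA by (metis)
  qed
  have cB: "coeff B k = (if k = 0 then 1 else if k = N then -1 else 0)" for k
    using N unfolding B_def by (auto simp: coeff_monom)
  have degB: "degree B = N"
    using N cB by (intro antisym degree_le le_degree) auto
  have B0: "poly B 0 \<noteq> 0" using N by (simp add: poly_0_coeff_0 cB)
  have "Abs_fps a * fps_of_poly B = fps_of_poly A"
  proof -
    have "Abs_fps a * fps_of_poly B = Abs_fps a - fps_X ^ N * Abs_fps a"
      unfolding B_def by (simp add: fps_of_poly_simps fps_of_poly_monom' algebra_simps)
    also have "\<dots> = fps_of_poly A"
    proof (rule fps_ext)
      fix k
      show "(Abs_fps a - fps_X ^ N * Abs_fps a) $ k = fps_of_poly A $ k"
      proof (cases "k < N")
        case True then show ?thesis by (simp add: fps_X_power_mult_nth cA)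
      next
        case False
        then have "a k = a (k - N)" using per[of "k - N"] by simp
        then show ?thesis using False by (simp add: fps_X_power_mult_nth cA)
      qed
    qed
    finally show ?thesis .
  qed
  then have "Abs_fps a = fps_of_poly A / fps_of_poly B"
    using fps_eq_poly_div B0 by blast
  then show ?thesis unfolding ratfun_space_def using B0 degA degB by blast
qed

lemma one_in_spec: "(1::real) \<in> spec_U q"
proof -
  have "Abs_fps (\<lambda>_. 1::real) \<in> ratfun_space" by (rule periodic_in_space[of 1]) auto
  moreover have "Abs_fps (\<lambda>_. 1::real) \<noteq> 0" by (metis fps_nth_Abs_fps fps_zero_nth one_neq_zero)
  moreover have "U_op q (Abs_fps (\<lambda>_. 1::real)) = fps_const 1 * Abs_fps (\<lambda>_. 1::real)"
    by (simp add: U_op_def)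
  ultimately show ?thesis unfolding spec_U_def by blast
qed

lemma zero_in_spec: assumes "q \<ge> 2" shows "(0::real) \<in> spec_U q"
proof -
  define a :: "nat \<Rightarrow> real" where "a k = (if k mod q = 1 then 1 else 0)" for k
  have "Abs_fps a \<in> ratfun_space" by (rule periodic_in_space[of q]) (use assms in \<open>auto simp: a_def\<close>)
  moreover have "Abs_fps a \<noteq> 0"
  proof
    assume "Abs_fps a = 0"
    then have "a 1 = 0" by (metis fps_nth_Abs_fps fps_zero_nth)
    then show False using assms by (simp add: a_def)
  qed
  moreover have "U_op q (Abs_fps a) = fps_const 0 * Abs_fps a"
    using assms by (simp add: U_op_def a_def fps_eq_iff)
  ultimately show ?thesis unfolding spec_U_def by blast
qed

lemma minus_one_in_spec: assumes "q \<ge> 2" shows "(-1::real) \<in> spec_U q"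
proof -
  define a :: "nat \<Rightarrow> real" where
    "a k = (if [int k = 1] (mod int q + 1) then 1 else if [int k = -1] (mod int q + 1) then -1 else 0)" for k
  have ne: "\<not> [(1::int) = -1] (mod int q + 1)"
  proof
    assume "[(1::int) = -1] (mod int q + 1)"
    then have "(int q + 1) dvd 2" by (simp add: cong_iff_dvd_diff)
    then have "int q + 1 \<le> 2" by (rule zdvd_imp_le) auto
    then show False using assms by simp
  qed
  have per: "a (k + (q+1)) = a k" for k
  proof -
    have "[int (k + (q+1)) = int k] (mod int q + 1)"
      by (simp add: cong_iff_dvd_diff add.commute)
    then have "[int (k + (q+1)) = c] (mod int q + 1) \<longleftrightarrow> [int k = c] (mod int q + 1)" for c
      by (meson cong_sym cong_trans)
    then show ?thesis unfolding a_def by presburger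
  qed
  have "Abs_fps a \<in> ratfun_space" by (rule periodic_in_space[of "q+1"]) (use per in auto)
  moreover have "Abs_fps a \<noteq> 0"
  proof
    assume "Abs_fps a = 0"
    then have "a 1 = 0" by (metis fps_nth_Abs_fps fps_zero_nth)
    then show False by (simp add: a_def)
  qed
  moreover have "a (q * k) = - a k" for k
  proof -
    have qm: "[int q = -1] (mod int q + 1)" by (simp add: cong_iff_dvd_diff)
    have e: "[int (q * k) = - int k] (mod int q + 1)"
      using cong_mult[OF qm cong_refl[of "int k"]] by simp
    have i1: "[int (q*k) = 1] (mod int q + 1) \<longleftrightarrow> [int k = -1] (mod int q + 1)"
    proof
      assume "[int (q*k) = 1] (mod int q + 1)"
      then have "[- int k = 1] (mod int q + 1)" by (meson e cong_sym cong_trans)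
      then have "[- (- int k) = -1] (mod int q + 1)" by (metis cong_minus_minus_iff)
      then show "[int k = -1] (mod int q + 1)" by simp
    next
      assume "[int k = -1] (mod int q + 1)"
      then have "[- int k = - (-1)] (mod int q + 1)" by (metis cong_minus_minus_iff)
      then show "[int (q*k) = 1] (mod int q + 1)" using e by (simp add: cong_trans)
    qed
    have i2: "[int (q*k) = -1] (mod int q + 1) \<longleftrightarrow> [int k = 1] (mod int q + 1)"
    proof
      assume "[int (q*k) = -1] (mod int q + 1)"
      then have "[- int k = -1] (mod int q + 1)" by (meson e cong_sym cong_trans)
      then show "[int k = 1] (mod int q + 1)" by (metis cong_minus_minus_iff)
    next
      assume "[int k = 1] (mod int q + 1)"
      then have "[- int k = -1] (mod int q + 1)" by (metis cong_minus_minus_iff)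
      then show "[int (q*k) = -1] (mod int q + 1)" using e by (simp add: cong_trans)
    qed
    have ne': "\<not> ([int k = 1] (mod int q + 1) \<and> [int k = -1] (mod int q + 1))"
      using ne by (meson cong_sym cong_trans)
    show ?thesis unfolding a_def using i1 i2 ne' by auto
  qed
  then have "U_op q (Abs_fps a) = fps_const (-1) * Abs_fps a"
    by (simp add: U_op_def fps_eq_iff)
  ultimately show ?thesis unfolding spec_U_def by blast
qed

definition Uc :: "nat \<Rightarrow> complex fps \<Rightarrow> complex fps" where
  "Uc q G = Abs_fps (\<lambda>n. G $ (q*n))"

lemma fps_finite_support_poly:
  fixes G :: "'a::comm_ring_1 fps"
  assumes "\<And>k. k \<ge> K \<Longrightarrow> G $ k = 0"
  shows "\<exists>P. G = fps_of_poly P"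
proof -
  define P where "P = Poly (map (\<lambda>k. G $ k) [0..<K])"
  have "G = fps_of_poly P"
  proof (rule fps_ext)
    fix k show "G $ k = fps_of_poly P $ k"
      using assms[of k] by (cases "k < K") (auto simp: P_def nth_default_def)
  qed
  then show ?thesis by blast
qed

lemma Uc_poly:
  assumes "q \<ge> 1"
  shows "\<exists>P'. Uc q (fps_of_poly P) = fps_of_poly P'"
proof (rule fps_finite_support_poly[of "degree P + 1"])
  fix k assume "k \<ge> degree P + 1"
  then have "q * k > degree P" using assms
    by (metis Suc_eq_plus1 Suc_le_lessD le_trans mult_1 mult_le_mono1)
  then show "Uc q (fps_of_poly P) $ k = 0" by (simp add: Uc_def coeff_eq_0)
qed

lemma Uc_mult_lin:
  assumes "q \<ge> 1"
  shows "Uc q (G * (1 - fps_const c * fps_X^q)) = Uc q G * (1 - fps_const c * fps_X)"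
proof (rule fps_ext)
  fix n
  have "G * (1 - fps_const c * fps_X^q) = G - fps_const c * (fps_X^q * G)"
    by (simp add: algebra_simps)
  then have "(G * (1 - fps_const c * fps_X^q)) $ (q*n) = G $ (q*n) - c * (fps_X^q * G) $ (q*n)"
    by (simp add: fps_mult_left_const_nth)
  also have "(fps_X^q * G) $ (q*n) = (if n = 0 then 0 else G $ (q * (n - 1)))"
    using assms by (auto simp: fps_X_power_mult_nth right_diff_distrib')
  finally have 1: "(G * (1 - fps_const c * fps_X^q)) $ (q*n) = G $ (q*n) - c * (if n = 0 then 0 else G $ (q * (n - 1)))" .
  have "Uc q G * (1 - fps_const c * fps_X) = Uc q G - fps_const c * (fps_X * Uc q G)"
    by (simp add: algebra_simps)
  then have "(Uc q G * (1 - fps_const c * fps_X)) $ n = Uc q G $ n - c * (fps_X * Uc q G) $ n"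
    by (simp add: fps_mult_left_const_nth)
  also have "(fps_X * Uc q G) $ n = (if n = 0 then 0 else G $ (q * (n - 1)))"
    using fps_X_power_mult_nth[of 1 "Uc q G" n] by (auto simp: Uc_def)
  finally show "Uc q (G * (1 - fps_const c * fps_X^q)) $ n = (Uc q G * (1 - fps_const c * fps_X)) $ n"
    using 1 by (simp add: Uc_def)
qed

lemma geom_poly:
  fixes \<alpha> :: "'a::comm_ring_1"
  shows "[:1, -\<alpha>:] * (\<Sum>j<n. monom (\<alpha>^j) j) = 1 - monom (\<alpha>^n) n"
proof (induction n)
  case 0 then show ?case by simp
next
  case (Suc n)
  have e: "[:1, -\<alpha>:] = 1 - monom \<alpha> 1"
    by (simp add: poly_eq_iff coeff_pCons coeff_monom split: nat.split)
  have "[:1, -\<alpha>:] * monom (\<alpha>^n) n = monom (\<alpha>^n) n - monom (\<alpha>^Suc n) (Suc n)"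
    unfolding e by (simp add: left_diff_distrib mult_monom)
  moreover have "[:1,-\<alpha>:] * (\<Sum>j<Suc n. monom (\<alpha>^j) j) = [:1,-\<alpha>:] * (\<Sum>j<n. monom (\<alpha>^j) j) + [:1,-\<alpha>:] * monom (\<alpha>^n) n"
    by (simp only: sum.lessThan_Suc distrib_left)
  moreover have gen: "\<And>a b :: 'a poly. (1 - a) + (a - b) = 1 - b" by simp
  ultimately show ?case using Suc by metis
qed

lemma Uc_denom:
  assumes q: "q \<ge> 1"
  shows "\<And>G. (\<exists>P. G * fps_of_poly (\<Prod>\<alpha>\<in>#M. [:1,-\<alpha>:]) = fps_of_poly P) \<Longrightarrow>
          (\<exists>P. Uc q G * fps_of_poly (\<Prod>\<alpha>\<in>#M. [:1, -(\<alpha>^q):]) = fps_of_poly P)"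
proof (induction M)
  case empty
  then obtain P where "G = fps_of_poly P" by auto
  then show ?case using Uc_poly[OF q] by auto
next
  case (add \<alpha> M G)
  from add.prems obtain P where P0: "G * fps_of_poly (\<Prod>\<alpha>\<in>#add_mset \<alpha> M. [:1,-\<alpha>:]) = fps_of_poly P"
    by blast
  then have P: "G * fps_of_poly ([:1,-\<alpha>:] * (\<Prod>\<alpha>\<in>#M. [:1,-\<alpha>:])) = fps_of_poly P"
    by (simp only: prod_mset.add_mset image_mset_add_mset)
  define S where "S = (\<Sum>j<q. monom (\<alpha>^j) j)"
  define G' where "G' = G * fps_of_poly ([:1,-\<alpha>:] * S)"
  have "G' * fps_of_poly (\<Prod>\<alpha>\<in>#M. [:1,-\<alpha>:]) = fps_of_poly (P * S)"
  proof -
    have "G' * fps_of_poly (\<Prod>\<alpha>\<in>#M. [:1,-\<alpha>:]) = (G * fps_of_poly ([:1,-\<alpha>:] * (\<Prod>\<alpha>\<in>#M. [:1,-\<alpha>:]))) * fps_of_poly S"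
      unfolding G'_def fps_of_poly_mult by (simp only: mult_ac)
    then show ?thesis using P by (simp only: fps_of_poly_mult)
  qed
  then obtain P3 where P3: "Uc q G' * fps_of_poly (\<Prod>\<alpha>\<in>#M. [:1, -(\<alpha>^q):]) = fps_of_poly P3"
    using add.IH by blast
  have eqS: "fps_of_poly ([:1,-\<alpha>:] * S) = 1 - fps_const (\<alpha>^q) * fps_X^q"
    unfolding S_def geom_poly by (simp only: fps_of_poly_diff fps_of_poly_1 fps_of_poly_monom)
  have "Uc q G' = Uc q G * (1 - fps_const (\<alpha>^q) * fps_X)"
    unfolding G'_def eqS by (rule Uc_mult_lin[OF q])
  moreover have "fps_of_poly [:1, -(\<alpha>^q):] = 1 - fps_const (\<alpha>^q) * fps_X"
    by (rule fps_ext) (simp add: coeff_pCons split: nat.split)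
  ultimately have "Uc q G * fps_of_poly (\<Prod>\<alpha>\<in>#add_mset \<alpha> M. [:1, -(\<alpha>^q):]) = Uc q G' * fps_of_poly (\<Prod>\<alpha>\<in>#M. [:1, -(\<alpha>^q):])"
    by (simp only: prod_mset.add_mset image_mset_add_mset fps_of_poly_mult mult.assoc)
  then show ?case using P3 by metis
qed

lemma reduce_coprime:
  fixes F :: "complex fps"
  assumes "F * fps_of_poly B = fps_of_poly A" "poly B 0 \<noteq> 0"
  obtains A1 B1 where "F * fps_of_poly B1 = fps_of_poly A1" "poly B1 0 \<noteq> 0" "coprime A1 B1"
proof -
  define g where "g = gcd A B"
  have B0: "B \<noteq> 0" using assms(2) by auto
  then have g0: "g \<noteq> 0" by (simp add: g_def)
  define A1 where "A1 = A div g"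
  define B1 where "B1 = B div g"
  have A: "A = g * A1" unfolding A1_def g_def by simp
  have B: "B = g * B1" unfolding B1_def g_def by simp
  have cop: "coprime A1 B1" unfolding A1_def B1_def g_def using B0 by (intro div_gcd_coprime) auto
  have "fps_of_poly g * (F * fps_of_poly B1) = fps_of_poly g * fps_of_poly A1"
    using assms(1) unfolding A B fps_of_poly_mult by (simp add: mult_ac)
  then have "F * fps_of_poly B1 = fps_of_poly A1"
  proof -
    have "fps_of_poly g \<noteq> 0" using g0 by (metis fps_of_poly_0 fps_of_poly_eq_iff)
    then show ?thesis using \<open>fps_of_poly g * (F * fps_of_poly B1) = fps_of_poly g * fps_of_poly A1\<close>
      by (simp only: mult_cancel_left) simp
  qed
  moreover have "poly B1 0 \<noteq> 0" using assms(2) B by auto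
  ultimately show ?thesis using cop that by blast
qed

lemma prod_lin_factor:
  assumes "\<And>x. x \<in># R \<Longrightarrow> x \<noteq> (0::complex)"
  shows "(\<Prod>x\<in>#R. [:-x,1:]) = smult (\<Prod>x\<in>#R. -x) (\<Prod>x\<in>#R. [:1, -(1/x):])"
  using assms
proof (induction R)
  case empty then show ?case by simp
next
  case (add x R)
  have x0: "x \<noteq> 0" using add.prems by simp
  have e: "[:-x,1:] = smult (-x) [:1, -(1/x):]" using x0 by simp
  have IH: "(\<Prod>x\<in>#R. [:-x,1:]) = smult (\<Prod>x\<in>#R. -x) (\<Prod>x\<in>#R. [:1, -(1/x):])"
    using add by simp
  have "(\<Prod>x\<in>#add_mset x R. [:-x,1:]) = [:-x,1:] * (\<Prod>x\<in>#R. [:-x,1:])" by simp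
  also have "\<dots> = smult (-x) [:1, -(1/x):] * smult (\<Prod>x\<in>#R. -x) (\<Prod>x\<in>#R. [:1, -(1/x):])"
    by (simp only: IH e[symmetric])
  also have "\<dots> = smult (-x * (\<Prod>x\<in>#R. -x)) ([:1, -(1/x):] * (\<Prod>x\<in>#R. [:1, -(1/x):]))"
    by (simp only: mult_smult_left mult_smult_right smult_smult mult.commute)
  finally show ?case by simp
qed

lemma root_preimage:
  fixes F :: "complex fps"
  assumes q: "q \<ge> 1" and FB: "F * fps_of_poly B = fps_of_poly A" and B0: "poly B 0 \<noteq> 0"
    and cop: "coprime A B" and U: "Uc q F = fps_const l * F" and l0: "l \<noteq> 0"
    and z: "poly B z = 0"
  shows "\<exists>w. poly B w = 0 \<and> w^q = z"
proof -
  have Bn0: "B \<noteq> 0" using B0 by auto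
  define R where "R = proots B"
  have Rnz: "x \<noteq> 0" if "x \<in># R" for x using that B0 Bn0 unfolding R_def by auto
  define c where "c = lead_coeff B"
  have c0: "c \<noteq> 0" using Bn0 by (simp add: c_def)
  define d where "d = (\<Prod>x\<in>#R. -x)"
  have d0: "d \<noteq> 0" using Rnz unfolding d_def by auto
  define \<Pi>2 where "\<Pi>2 = (\<Prod>x\<in>#R. [:1, -(1/x):])"
  have Bdec: "B = smult (c*d) \<Pi>2"
  proof -
    have "B = smult c (\<Prod>x\<in>#R. [:-x,1:])" using complex_poly_decompose_multiset[of B] by (simp add: R_def c_def)
    also have "\<dots> = smult c (smult d \<Pi>2)" using prod_lin_factor[OF Rnz] by (simp only: d_def \<Pi>2_def)
    finally show ?thesis by (simp only: smult_smult)
  qed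
  have "fps_const (c*d) * (F * fps_of_poly \<Pi>2) = fps_of_poly A"
    using FB unfolding Bdec fps_of_poly_smult by (simp only: mult_ac)
  then have "F * fps_of_poly \<Pi>2 = fps_of_poly (smult (1/(c*d)) A)"
  proof -
    have "fps_const (1/(c*d)) * (fps_const (c*d) * (F * fps_of_poly \<Pi>2)) = F * fps_of_poly \<Pi>2"
      using c0 d0 by (simp only: mult.assoc[symmetric] fps_const_mult) simp
    then show ?thesis using \<open>fps_const (c*d) * (F * fps_of_poly \<Pi>2) = fps_of_poly A\<close>
      by (simp only: fps_of_poly_smult)
  qed
  then have "\<exists>P. F * fps_of_poly (\<Prod>\<alpha>\<in>#image_mset (\<lambda>x. 1/x) R. [:1,-\<alpha>:]) = fps_of_poly P"
    unfolding \<Pi>2_def by (auto simp: image_mset.compositionality o_def)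
  from Uc_denom[OF q this] obtain P2 where
    P2: "Uc q F * fps_of_poly (\<Prod>x\<in>#R. [:1, -((1/x)^q):]) = fps_of_poly P2"
    by (auto simp: image_mset.compositionality o_def)
  define H where "H = (\<Prod>x\<in>#R. [:1, -((1/x)^q):])"
  have "fps_of_poly (smult l (A * H)) = fps_of_poly (P2 * B)"
  proof -
    have "fps_of_poly (smult l (A * H)) = fps_const l * (F * fps_of_poly B) * fps_of_poly H"
      using FB by (simp only: fps_of_poly_smult fps_of_poly_mult mult_ac)
    also have "\<dots> = (Uc q F * fps_of_poly H) * fps_of_poly B" using U by (simp add: mult_ac)
    also have "\<dots> = fps_of_poly (P2 * B)" using P2 by (simp add: H_def fps_of_poly_mult)
    finally show ?thesis .
  qed
  then have "smult l (A * H) = P2 * B" by (simp only: fps_of_poly_eq_iff)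
  then have "B dvd smult l (A * H)" by (metis dvd_triv_right)
  then have "B dvd A * H" using l0 by (rule dvd_smult_cancel)
  moreover have "coprime B A" using cop by (simp add: coprime_commute)
  ultimately have "B dvd H" by (simp add: coprime_dvd_mult_right_iff)
  then obtain k where "H = B * k" by (elim dvdE)
  then have "poly H z = 0" using z by simp
  then have "0 \<in># image_mset (\<lambda>x. poly [:1, -((1/x)^q):] z) R"
    unfolding H_def poly_prod_mset by simp
  then obtain x where x: "x \<in># R" "poly [:1, -((1/x)^q):] z = 0" by auto
  have "x \<noteq> 0" using Rnz x(1) by auto
  then have "z = x^q" using x(2) by (simp add: field_simps power_one_over)
  moreover have "poly B x = 0" using x(1) Bn0 unfolding R_def by simp
  ultimately show ?thesis by blast
qed

lemma roots_unity:
  fixes B :: "complex poly"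
  assumes q: "q \<ge> 2" and Bn0: "B \<noteq> 0" and B0: "poly B 0 \<noteq> 0"
    and pre: "\<And>z. poly B z = 0 \<Longrightarrow> \<exists>w. poly B w = 0 \<and> w^q = z"
  shows "\<exists>N\<ge>1. \<forall>z. poly B z = 0 \<longrightarrow> z^N = 1"
proof -
  define S where "S = {z. poly B z = 0}"
  have finS: "finite S" unfolding S_def using Bn0 by (rule poly_roots_finite)
  define \<tau> where "\<tau> z = (SOME w. poly B w = 0 \<and> w^q = z)" for z
  have \<tau>: "\<tau> z \<in> S \<and> (\<tau> z)^q = z" if "z \<in> S" for z
  proof -
    have "\<exists>w. poly B w = 0 \<and> w^q = z" using pre that unfolding S_def by auto
    then have "poly B (\<tau> z) = 0 \<and> (\<tau> z)^q = z" unfolding \<tau>_def by (rule someI_ex)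
    then show ?thesis unfolding S_def by auto
  qed
  have it: "(\<tau>^^d) y \<in> S \<and> ((\<tau>^^d) y)^(q^d) = y" if "y \<in> S" for d y
  proof (induction d)
    case 0 then show ?case using that by simp
  next
    case (Suc d)
    let ?w = "(\<tau>^^d) y"
    have "(\<tau>^^Suc d) y = \<tau> ?w" by simp
    moreover have "(\<tau> ?w)^(q^Suc d) = ((\<tau> ?w)^q)^(q^d)" by (simp add: power_mult)
    ultimately show ?case using \<tau>[of ?w] Suc by simp
  qed
  have S0: "z \<noteq> 0" if "z \<in> S" for z using that B0 unfolding S_def by auto
  have unity: "\<exists>M\<ge>1. z^M = 1" if zS: "z \<in> S" for z
  proof -
    define sq where "sq j = (\<tau>^^j) z" for j
    have "sq ` UNIV \<subseteq> S" using it[OF zS] unfolding sq_def by auto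
    then have "finite (sq ` UNIV)" using finS finite_subset by blast
    then have "\<not> inj sq" using finite_imageD by blast
    then obtain i j where ij: "i \<noteq> j" "sq i = sq j" unfolding inj_def by blast
    have "\<exists>i j. i < j \<and> sq i = sq j"
    proof (cases "i < j")
      case True then show ?thesis using ij by blast
    next
      case False then have "j < i" using ij by auto
      then show ?thesis using ij by metis
    qed
    then obtain i j where ij: "i < j" "sq i = sq j" by blast
    define d where "d = j - i"
    have d1: "d \<ge> 1" using ij unfolding d_def by auto
    define w where "w = sq i"
    have wS: "w \<in> S" using it[OF zS] unfolding w_def sq_def by auto
    have jd: "j = d + i" using ij(1) unfolding d_def by simp
    have "sq j = (\<tau>^^d) w" unfolding sq_def w_def jd by (simp add: funpow_add)
    then have "w^(q^d) = w" using it[OF wS, of d] ij(2) unfolding w_def by simp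
    moreover have "q^d \<ge> 2"
    proof -
      have "q^1 \<le> q^d" using q d1 by (intro power_increasing) auto
      then show ?thesis using q by simp
    qed
    moreover obtain e where e: "q^d = Suc e" using \<open>q^d \<ge> 2\<close> by (cases "q^d") auto
    ultimately have "w^(q^d - 1) * w = 1 * w"
      by (simp add: power_Suc2)
    then have wM: "w^(q^d - 1) = 1" using S0[OF wS] by simp
    have "z = w^(q^i)" using it[OF zS, of i] unfolding w_def sq_def by simp
    then have "z^(q^d - 1) = (w^(q^d - 1))^(q^i)" by (simp add: power_mult[symmetric] mult.commute)
    then have "z^(q^d - 1) = 1" using wM by simp
    moreover have "q^d - 1 \<ge> 1" using \<open>q^d \<ge> 2\<close> by simp
    ultimately show ?thesis by blast
  qed
  define M where "M z = (SOME M. M \<ge> 1 \<and> z^M = 1)" for z :: complex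
  have M: "M z \<ge> 1 \<and> z^(M z) = 1" if "z \<in> S" for z
    unfolding M_def using unity[OF that] by (rule someI_ex)
  define N where "N = (\<Prod>z\<in>S. M z)"
  have N1: "N \<ge> 1" unfolding N_def using M by (simp add: Suc_le_eq prod_pos)
  have "z^N = 1" if "z \<in> S" for z
  proof -
    have "M z dvd N" unfolding N_def using finS that by (rule dvd_prodI)
    then obtain k where "N = M z * k" by (elim dvdE)
    then show ?thesis using M[OF that] by (simp add: power_mult)
  qed
  then show ?thesis using N1 unfolding S_def by blast
qed

definition has_antider :: "complex \<Rightarrow> (complex \<Rightarrow> complex) \<Rightarrow> bool" where
  "has_antider h g \<longleftrightarrow> (\<exists>R. \<forall>x. poly R x - poly R (x - h) = g x)"

lemma has_antider_add:
  assumes "has_antider h f" "has_antider h g" shows "has_antider h (\<lambda>x. f x + g x)"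
proof -
  obtain R1 where R1: "\<forall>x. poly R1 x - poly R1 (x - h) = f x" using assms(1) unfolding has_antider_def by blast
  obtain R2 where R2: "\<forall>x. poly R2 x - poly R2 (x - h) = g x" using assms(2) unfolding has_antider_def by blast
  have "poly (R1 + R2) x - poly (R1 + R2) (x - h) = f x + g x" for x
  proof -
    have "poly (R1 + R2) x - poly (R1 + R2) (x - h) = (poly R1 x - poly R1 (x - h)) + (poly R2 x - poly R2 (x - h))"
      by (simp only: poly_add diff_add_eq add_diff_eq diff_diff_eq add.assoc add.commute add.left_commute)
    then show ?thesis using R1 R2 by simp
  qed
  then have "\<forall>x. poly (R1 + R2) x - poly (R1 + R2) (x - h) = f x + g x" by blast
  then show ?thesis unfolding has_antider_def by blast
qed

lemma has_antider_smult:
  assumes "has_antider h f" shows "has_antider h (\<lambda>x. c * f x)"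
proof -
  obtain R where R: "\<forall>x. poly R x - poly R (x - h) = f x" using assms(1) unfolding has_antider_def by blast
  have "poly (smult c R) x - poly (smult c R) (x - h) = c * f x" for x
  proof -
    have "poly (smult c R) x - poly (smult c R) (x - h) = c * (poly R x - poly R (x - h))"
      by (simp only: poly_smult right_diff_distrib)
    then show ?thesis using R by simp
  qed
  then have "\<forall>x. poly (smult c R) x - poly (smult c R) (x - h) = c * f x" by blast
  then show ?thesis unfolding has_antider_def by blast
qed

lemma has_antider_sum:
  fixes n :: nat
  shows "(\<And>k. k < n \<Longrightarrow> has_antider h (f k)) \<Longrightarrow> has_antider h (\<lambda>x. \<Sum>k<n. f k x)"
proof (induction n)
  case 0
  have "\<forall>x. poly 0 x - poly 0 (x - h) = (\<Sum>k<0. f k x)" by simp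
  then show ?case unfolding has_antider_def by blast
next
  case (Suc n)
  have a: "has_antider h (\<lambda>x. \<Sum>k<n. f k x)" using Suc.IH Suc.prems by simp
  have b: "has_antider h (f n)" using Suc.prems by simp
  have "has_antider h (\<lambda>x. (\<Sum>k<n. f k x) + f n x)" using has_antider_add[OF a b] .
  then show ?case by simp
qed

lemma has_antider_monom:
  assumes h: "h \<noteq> 0"
  shows "has_antider h (\<lambda>x. x^n)"
proof (induction n rule: less_induct)
  case (less n)
  define c where "c k = of_nat (Suc n choose k) * (-h)^(Suc n - k)" for k
  have bin: "(x - h)^(Suc n) = (\<Sum>k<n. c k * x^k) + of_nat (Suc n) * (-h) * x^n + x^(Suc n)" for x
  proof -
    have "(x - h)^(Suc n) = (x + (-h))^(Suc n)" by simp
    also have "\<dots> = (\<Sum>k\<le>Suc n. of_nat (Suc n choose k) * x^k * (-h)^(Suc n - k))"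
      by (rule binomial_ring)
    also have "\<dots> = (\<Sum>k<Suc (Suc n). of_nat (Suc n choose k) * x^k * (-h)^(Suc n - k))"
      by (simp add: lessThan_Suc_atMost)
    also have "\<dots> = (\<Sum>k<n. c k * x^k) + of_nat (Suc n) * (-h) * x^n + x^(Suc n)"
      by (simp add: c_def mult_ac)
    finally show ?thesis .
  qed
  have eq: "x^n = (1 / (of_nat (Suc n) * h)) * ((x^(Suc n) - (x - h)^(Suc n)) + (\<Sum>k<n. c k * x^k))" for x
  proof -
    have "x^(Suc n) - (x - h)^(Suc n) + (\<Sum>k<n. c k * x^k) = of_nat (Suc n) * h * x^n"
      unfolding bin by (simp add: algebra_simps)
    moreover have "of_nat (Suc n) * h \<noteq> 0" using h by (simp del: of_nat_Suc)
    ultimately show ?thesis by (simp del: of_nat_Suc)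
  qed
  have a1: "has_antider h (\<lambda>x. x^(Suc n) - (x - h)^(Suc n))"
  proof -
    have "\<forall>x. poly (monom 1 (Suc n)) x - poly (monom 1 (Suc n)) (x - h) = x^(Suc n) - (x - h)^(Suc n)"
      by (simp add: poly_monom)
    then show ?thesis unfolding has_antider_def by blast
  qed
  have a2: "has_antider h (\<lambda>x. \<Sum>k<n. c k * x^k)"
  proof (rule has_antider_sum)
    fix k assume "k < n"
    show "has_antider h (\<lambda>x. c k * x^k)" using has_antider_smult[OF less.IH[OF \<open>k < n\<close>]] .
  qed
  have fe: "(\<lambda>x. x^n) = (\<lambda>x. (1 / (of_nat (Suc n) * h)) * ((x^(Suc n) - (x - h)^(Suc n)) + (\<Sum>k<n. c k * x^k)))"
    by (rule ext) (rule eq)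
  show ?case unfolding fe using has_antider_smult[OF has_antider_add[OF a1 a2]] .
qed

lemma has_antider_poly:
  fixes h :: complex and Q :: "complex poly"
  assumes h: "h \<noteq> 0"
  shows "\<exists>R. \<forall>x. poly R x - poly R (x - h) = poly Q x"
proof -
  have "has_antider h (\<lambda>x. \<Sum>i<Suc (degree Q). coeff Q i * x^i)"
  proof (rule has_antider_sum)
    fix k show "has_antider h (\<lambda>x. coeff Q k * x^k)" using has_antider_smult[OF has_antider_monom[OF h]] .
  qed
  moreover have "poly Q = (\<lambda>x. \<Sum>i<Suc (degree Q). coeff Q i * x^i)"
    by (rule ext) (simp only: poly_altdef lessThan_Suc_atMost)
  ultimately have "has_antider h (poly Q)" by (simp only:)
  then show ?thesis unfolding has_antider_def by blast
qed

lemma prod_dvd_cyclo: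
  assumes "\<And>x. x \<in># R \<Longrightarrow> (1/x)^N = (1::complex)"
  shows "(\<Prod>x\<in>#R. [:1,-(1/x):]) dvd (1 - monom 1 N)^(size R)"
  using assms
proof (induction R)
  case empty then show ?case by simp
next
  case (add x R)
  have "[:1,-(1/x):] * (\<Sum>j<N. monom ((1/x)^j) j) = 1 - monom ((1/x)^N) N" by (rule geom_poly)
  also have "\<dots> = 1 - monom 1 N" using add.prems by simp
  finally have "[:1,-(1/x):] dvd 1 - monom 1 N" by (metis dvd_triv_left)
  moreover have "(\<Prod>x\<in>#R. [:1,-(1/x):]) dvd (1 - monom 1 N)^(size R)" using add by simp
  ultimately have "[:1,-(1/x):] * (\<Prod>x\<in>#R. [:1,-(1/x):]) dvd (1 - monom 1 N) * (1 - monom 1 N)^(size R)"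
    by (rule mult_dvd_mono)
  then show ?case by simp
qed

lemma denom_cyclo:
  fixes F :: "complex fps"
  assumes FB: "F * fps_of_poly B = fps_of_poly A" and B0: "poly B 0 \<noteq> 0"
    and N: "\<And>z. poly B z = 0 \<Longrightarrow> z^N = 1"
  shows "\<exists>P D. F * (1 - fps_X^N)^D = fps_of_poly P"
proof -
  have Bn0: "B \<noteq> 0" using B0 by auto
  define R where "R = proots B"
  have Rnz: "x \<noteq> 0" if "x \<in># R" for x using that B0 Bn0 unfolding R_def by auto
  define c where "c = lead_coeff B"
  have c0: "c \<noteq> 0" using Bn0 by (simp add: c_def)
  define d where "d = (\<Prod>x\<in>#R. -x)"
  have d0: "d \<noteq> 0" using Rnz unfolding d_def by auto
  define \<Pi>2 where "\<Pi>2 = (\<Prod>x\<in>#R. [:1, -(1/x):])"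
  have Bdec: "B = smult (c*d) \<Pi>2"
  proof -
    have "B = smult c (\<Prod>x\<in>#R. [:-x,1:])" using complex_poly_decompose_multiset[of B] by (simp add: R_def c_def)
    also have "\<dots> = smult c (smult d \<Pi>2)" using prod_lin_factor[OF Rnz] by (simp only: d_def \<Pi>2_def)
    finally show ?thesis by (simp only: smult_smult)
  qed
  have "fps_const (c*d) * (F * fps_of_poly \<Pi>2) = fps_of_poly A"
    using FB unfolding Bdec fps_of_poly_smult by (simp only: mult_ac)
  then have F2: "F * fps_of_poly \<Pi>2 = fps_of_poly (smult (1/(c*d)) A)"
  proof -
    have "fps_const (1/(c*d)) * (fps_const (c*d) * (F * fps_of_poly \<Pi>2)) = F * fps_of_poly \<Pi>2"
      using c0 d0 by (simp only: mult.assoc[symmetric] fps_const_mult) simp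
    then show ?thesis using \<open>fps_const (c*d) * (F * fps_of_poly \<Pi>2) = fps_of_poly A\<close>
      by (simp only: fps_of_poly_smult)
  qed
  have "\<Pi>2 dvd (1 - monom 1 N)^(size R)" unfolding \<Pi>2_def
  proof (rule prod_dvd_cyclo)
    fix x assume "x \<in># R"
    then have "x^N = 1" using N Bn0 unfolding R_def by simp
    then show "(1/x)^N = 1" by (simp add: power_one_over)
  qed
  then obtain K where K: "(1 - monom 1 N)^(size R) = \<Pi>2 * K" by (elim dvdE)
  have "F * fps_of_poly ((1 - monom 1 N)^(size R)) = fps_of_poly (smult (1/(c*d)) A * K)"
    unfolding K fps_of_poly_mult using F2 by (simp only: mult.assoc[symmetric])
  then have "F * (1 - fps_X^N)^(size R) = fps_of_poly (smult (1/(c*d)) A * K)"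
    by (simp only: fps_of_poly_power fps_of_poly_diff fps_of_poly_1 fps_of_poly_monom')
  then show ?thesis by blast
qed

lemma quasi_poly:
  fixes G :: "complex fps"
  assumes N: "N \<ge> 1"
  shows "G * (1 - fps_X^N)^D = fps_of_poly P \<Longrightarrow> r < N \<Longrightarrow>
           \<exists>Q K. \<forall>k\<ge>K. k mod N = r \<longrightarrow> G $ k = poly Q (of_nat k)"
proof (induction D arbitrary: G P)
  case 0
  then have "G = fps_of_poly P" by simp
  then have "\<forall>k\<ge>Suc (degree P). k mod N = r \<longrightarrow> G $ k = poly 0 (of_nat k)"
    by (auto simp: coeff_eq_0)
  then show ?case by blast
next
  case (Suc D)
  define G' where "G' = G * (1 - fps_X^N)"
  have "G' * (1 - fps_X^N)^D = fps_of_poly P" using Suc.prems(1) unfolding G'_def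
    by (simp only: power_Suc mult.assoc)
  then obtain Q K where QK: "\<forall>k\<ge>K. k mod N = r \<longrightarrow> G' $ k = poly Q (of_nat k)"
    using Suc.IH Suc.prems(2) by blast
  have G'k: "G' $ k = G $ k - (if k < N then 0 else G $ (k - N))" for k
  proof -
    have "G' = G - fps_X^N * G" unfolding G'_def by (simp add: algebra_simps)
    then show ?thesis by (simp add: fps_X_power_mult_nth)
  qed
  obtain R where R: "\<forall>x. poly R x - poly R (x - of_nat N) = poly Q x"
    using has_antider_poly[of "of_nat N" Q] N by auto
  define hh where "hh k = G $ k - poly R (of_nat k)" for k
  have step: "hh k = hh (k - N)" if "k \<ge> K + N" "k mod N = r" for k
  proof -
    have kN: "\<not> k < N" using that by simp
    have "G $ k - G $ (k - N) = poly Q (of_nat k)" using QK that G'k[of k] kN by simp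
    also have "\<dots> = poly R (of_nat k) - poly R (of_nat k - of_nat N)" using R by simp
    also have "of_nat k - of_nat N = (of_nat (k - N) :: complex)" using kN by (simp add: of_nat_diff)
    finally show ?thesis unfolding hh_def by (simp add: algebra_simps)
  qed
  define k1 where "k1 = (K + N) * N + r"
  have k1ge: "k1 \<ge> K + N" unfolding k1_def using N
    by (metis le_add1 le_trans mult_le_mono2 mult.right_neutral)
  have k1mod: "k1 mod N = r" unfolding k1_def using Suc.prems(2) by simp
  have hj: "hh (k1 + j * N) = hh k1" for j
  proof (induction j)
    case 0 then show ?case by simp
  next
    case (Suc j)
    have "(k1 + Suc j * N) mod N = k1 mod N" by (rule mod_mult_self1)
    then have "(k1 + Suc j * N) mod N = r" using k1mod by simp
    moreover have "k1 + Suc j * N \<ge> K + N" using k1ge by simp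
    ultimately have "hh (k1 + Suc j * N) = hh (k1 + Suc j * N - N)" using step by blast
    also have "k1 + Suc j * N - N = k1 + j * N" by simp
    finally show ?case using Suc.IH by simp
  qed
  have "\<forall>k\<ge>k1. k mod N = r \<longrightarrow> G $ k = poly (R + [:hh k1:]) (of_nat k)"
  proof (intro allI impI)
    fix k assume k: "k1 \<le> k" "k mod N = r"
    then have "N dvd k - k1" using k1mod mod_eq_dvd_iff_nat[OF k(1), of N] by simp
    then obtain j where "k - k1 = N * j" by (elim dvdE)
    then have "k = k1 + j * N" using k(1) by (simp add: mult.commute)
    then have "hh k = hh k1" using hj by simp
    then show "G $ k = poly (R + [:hh k1:]) (of_nat k)" unfolding hh_def by (simp add: algebra_simps)
  qed
  then show ?case by blast
qed

lemma key_complex: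
  fixes F :: "complex fps"
  assumes q: "q \<ge> 2" and FB: "F * fps_of_poly B = fps_of_poly A" and B0: "poly B 0 \<noteq> 0"
    and F0: "F \<noteq> 0" and U: "Uc q F = fps_const l * F" and l0: "l \<noteq> 0"
  shows "\<exists>L\<ge>1. \<exists>e. l^L = of_nat (q^(L*e))"
proof (cases "l = 1")
  case True
  then have "l^1 = of_nat (q^(1*0))" by simp
  then show ?thesis by blast
next
  case l1: False
  obtain A1 B1 where FB1: "F * fps_of_poly B1 = fps_of_poly A1" and B10: "poly B1 0 \<noteq> 0"
    and cop: "coprime A1 B1"
    using reduce_coprime[OF FB B0] by blast
  have B1n0: "B1 \<noteq> 0" using B10 by auto
  have pre: "\<exists>w. poly B1 w = 0 \<and> w^q = z" if "poly B1 z = 0" for z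
    using root_preimage[of q F B1 A1 l z] q FB1 B10 cop U l0 that by auto
  obtain N where N1: "N \<ge> 1" and Nz: "\<forall>z. poly B1 z = 0 \<longrightarrow> z^N = 1"
    using roots_unity[OF q B1n0 B10 pre] by blast
  obtain P D where PD: "F * (1 - fps_X^N)^D = fps_of_poly P"
    using denom_cyclo[OF FB1 B10] Nz by blast
  have rel: "F $ (q * k) = l * F $ k" for k
  proof -
    have "Uc q F $ k = (fps_const l * F) $ k" using U by simp
    then show ?thesis by (simp add: Uc_def)
  qed
  have relj: "F $ (q^j * k) = l^j * F $ k" for j k
  proof (induction j)
    case 0 then show ?case by simp
  next
    case (Suc j)
    have "F $ (q^Suc j * k) = F $ (q * (q^j * k))" by (simp add: mult.assoc)
    also have "\<dots> = l * F $ (q^j * k)" by (rule rel)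
    finally show ?case using Suc by simp
  qed
  obtain k0 where k0: "F $ k0 \<noteq> 0" using F0 fps_nonzero_nth by blast
  have k0pos: "k0 \<ge> 1"
  proof (rule ccontr)
    assume "\<not> k0 \<ge> 1"
    then have "k0 = 0" by simp
    then have "F $ 0 = l * F $ 0" using rel[of 0] by simp
    then show False using k0 \<open>k0 = 0\<close> l1 by simp
  qed
  define \<rho> where "\<rho> j = (q^j * k0) mod N" for j
  have "\<rho> ` UNIV \<subseteq> {..<N}" unfolding \<rho>_def using N1 by auto
  then have "finite (\<rho> ` UNIV)" using finite_subset by blast
  then have "\<not> inj \<rho>" using finite_imageD by blast
  then obtain i j where ij: "i \<noteq> j" "\<rho> i = \<rho> j" unfolding inj_def by blast
  have "\<exists>J J'. J < J' \<and> \<rho> J = \<rho> J'"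
  proof (cases "i < j")
    case True then show ?thesis using ij by blast
  next
    case False then have "j < i" using ij by auto
    then show ?thesis using ij by metis
  qed
  then obtain J J' where JJ: "J < J'" "\<rho> J = \<rho> J'" by blast
  define L where "L = J' - J"
  have L1: "L \<ge> 1" using JJ unfolding L_def by simp
  have J'eq: "J' = J + L" using JJ unfolding L_def by simp
  define r where "r = \<rho> J"
  have rN: "r < N" unfolding r_def \<rho>_def using N1 by simp
  have cls: "(q^(J + i*L) * k0) mod N = r" for i
  proof (induction i)
    case 0 then show ?case by (simp add: r_def \<rho>_def)
  next
    case (Suc i)
    have "q^(J + Suc i * L) * k0 = q^L * (q^(J + i*L) * k0)"
      by (simp add: power_add mult_ac)
    then have "(q^(J + Suc i * L) * k0) mod N = (q^L * ((q^(J + i*L) * k0) mod N)) mod N"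
      by (simp only: mod_mult_right_eq)
    also have "\<dots> = (q^L * (q^J * k0)) mod N" using Suc unfolding r_def \<rho>_def
      by (simp add: mod_mult_right_eq)
    also have "q^L * (q^J * k0) = q^J' * k0" unfolding J'eq by (simp add: power_add mult_ac)
    finally show ?case using JJ(2) unfolding r_def \<rho>_def by simp
  qed
  obtain Q K0 where QK: "\<forall>k\<ge>K0. k mod N = r \<longrightarrow> F $ k = poly Q (of_nat k)"
    using quasi_poly[OF N1 PD rN] by blast
  define t where "t = q^L"
  have t2: "t \<ge> 2"
  proof -
    have "q^1 \<le> q^L" using q L1 by (intro power_increasing) auto
    then show ?thesis using q unfolding t_def by simp
  qed
  define c where "c = q^J * k0"
  have c1: "c \<ge> 1" unfolding c_def using q k0pos by simp
  define p where "p i = c * t^i" for i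
  have p_eq: "p i = q^(J + i*L) * k0" for i
    unfolding p_def c_def t_def by (simp add: power_add power_mult mult_ac)
  have Fp: "F $ (p i) = l^(J + i*L) * F $ k0" for i
    unfolding p_eq by (rule relj)
  have pge: "p i \<ge> i" for i
  proof -
    have "i < 2^i" by simp
    also have "(2::nat)^i \<le> t^i" using t2 by (intro power_mono) auto
    also have "t^i \<le> p i" unfolding p_def using c1 by simp
    finally show ?thesis by simp
  qed
  have FQ: "F $ (p i) = poly Q (of_nat (p i))" if "i \<ge> K0" for i
  proof -
    have "p i \<ge> K0" using pge[of i] that by simp
    moreover have "p i mod N = r" using cls[of i] unfolding p_eq .
    ultimately show ?thesis using QK by blast
  qed
  define H where "H = pcompose Q [:0, of_nat t:] - smult (l^L) Q"
  have Hz: "poly H (of_nat (p i)) = 0" if "i \<ge> K0" for i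
  proof -
    have pS: "p (Suc i) = t * p i" unfolding p_def by (simp add: mult_ac)
    have "poly H (of_nat (p i)) = poly Q (of_nat t * of_nat (p i)) - l^L * poly Q (of_nat (p i))"
      unfolding H_def by (simp add: poly_pcompose mult.commute)
    also have "of_nat t * of_nat (p i) = (of_nat (p (Suc i)) :: complex)" unfolding pS by simp
    also have "poly Q (of_nat (p (Suc i))) = F $ (p (Suc i))" using FQ[of "Suc i"] that by simp
    also have "poly Q (of_nat (p i)) = F $ (p i)" using FQ[of i] that by simp
    also have "F $ (p (Suc i)) - l^L * F $ (p i) = 0"
      unfolding Fp by (simp add: power_add mult_ac)
    finally show ?thesis .
  qed
  have inj_p: "inj p"
  proof -
    have "strict_mono p" unfolding strict_mono_Suc_iff p_def using t2 c1 by simp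
    then show ?thesis by (rule strict_mono_imp_inj_on)
  qed
  have "H = 0"
  proof (rule ccontr)
    assume "H \<noteq> 0"
    then have fin: "finite {x. poly H x = 0}" by (rule poly_roots_finite)
    have "(\<lambda>i. (of_nat (p i) :: complex)) ` {K0..} \<subseteq> {x. poly H x = 0}" using Hz by auto
    then have "finite ((\<lambda>i. (of_nat (p i) :: complex)) ` {K0..})" using fin finite_subset by blast
    moreover have "inj_on (\<lambda>i. (of_nat (p i) :: complex)) {K0..}"
      using inj_p unfolding inj_on_def by (simp only: of_nat_eq_iff) blast
    ultimately have "finite {K0..}" using finite_imageD by blast
    then show False by (simp add: infinite_Ici)
  qed
  then have Heq: "pcompose Q [:0, of_nat t:] = smult (l^L) Q" unfolding H_def by simp
  have Q0: "Q \<noteq> 0"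
  proof
    assume "Q = 0"
    then have "F $ (p K0) = 0" using FQ[of K0] by simp
    then show False using Fp[of K0] k0 l0 by simp
  qed
  define e where "e = degree Q"
  have "coeff (pcompose Q [:0, of_nat t:]) e = coeff (smult (l^L) Q) e" using Heq by simp
  then have "of_nat t ^ e * lead_coeff Q = l^L * lead_coeff Q"
    unfolding e_def coeff_pcompose_linear by simp
  then have "l^L = of_nat t ^ e" using Q0 by simp
  also have "\<dots> = of_nat (q^(L*e))" unfolding t_def by (simp add: power_mult)
  finally show ?thesis using L1 by blast
qed

lemma key_real:
  assumes q: "q \<ge> 2" and lam: "l \<in> spec_U q" and l0: "l \<noteq> 0"
  shows "\<exists>L\<ge>1. \<exists>e. l^L = real (q^(L*e))"
proof -
  obtain f where f: "f \<in> ratfun_space" "f \<noteq> 0" "U_op q f = fps_const l * f"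
    using lam unfolding spec_U_def by blast
  obtain A B where AB: "f = fps_of_poly A / fps_of_poly B" "poly B 0 \<noteq> 0"
    using f(1) unfolding ratfun_space_def by blast
  have B0: "fps_of_poly B $ 0 \<noteq> 0" using AB(2) by (simp add: poly_0_coeff_0)
  have fB: "f * fps_of_poly B = fps_of_poly A"
    unfolding AB(1) fps_divide_unit[OF B0] using B0 by (simp add: mult.assoc inverse_mult_eq_1)
  define F where "F = Abs_fps (\<lambda>k. complex_of_real (f $ k))"
  define A' where "A' = map_poly complex_of_real A"
  define B' where "B' = map_poly complex_of_real B"
  have FB: "F * fps_of_poly B' = fps_of_poly A'"
  proof (rule fps_ext)
    fix n
    have "(F * fps_of_poly B') $ n = (\<Sum>i=0..n. complex_of_real (f $ i) * complex_of_real (coeff B (n - i)))"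
      by (simp add: fps_mult_nth F_def B'_def coeff_map_poly)
    also have "\<dots> = complex_of_real ((f * fps_of_poly B) $ n)"
      by (simp add: fps_mult_nth)
    also have "\<dots> = fps_of_poly A' $ n" unfolding fB by (simp add: A'_def coeff_map_poly)
    finally show "(F * fps_of_poly B') $ n = fps_of_poly A' $ n" .
  qed
  have B'0: "poly B' 0 \<noteq> 0" using AB(2) by (simp add: B'_def poly_0_coeff_0 coeff_map_poly)
  have F0: "F \<noteq> 0"
  proof -
    obtain k where "f $ k \<noteq> 0" using f(2) fps_nonzero_nth by blast
    then have "F $ k \<noteq> 0" by (simp add: F_def)
    then show ?thesis by auto
  qed
  have U: "Uc q F = fps_const (complex_of_real l) * F"
  proof (rule fps_ext)
    fix n
    have "U_op q f $ n = (fps_const l * f) $ n" using f(3) by simp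
    then have "f $ (q*n) = l * f $ n" by (simp add: U_op_def)
    then show "Uc q F $ n = (fps_const (complex_of_real l) * F) $ n"
      by (simp add: Uc_def F_def)
  qed
  obtain L e where Le: "L \<ge> 1" "(complex_of_real l)^L = of_nat (q^(L*e))"
    using key_complex[OF q FB B'0 F0 U] l0 by auto
  then have "complex_of_real (l^L) = complex_of_real (real (q^(L*e)))" by simp
  then have "l^L = real (q^(L*e))" by (simp only: of_real_eq_iff)
  then show ?thesis using Le(1) by blast
qed

theorem mainTheorem14:
  fixes m n :: nat
  assumes "m \<ge> 2" and "n \<ge> 2" and "coprime m n"
  shows "spec_U m \<inter> spec_U n = {0, 1, -1}"
proof
  show "{0, 1, -1} \<subseteq> spec_U m \<inter> spec_U n"
    using assms zero_in_spec one_in_spec minus_one_in_spec by auto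
next
  show "spec_U m \<inter> spec_U n \<subseteq> {0, 1, -1}"
  proof
    fix l assume l: "l \<in> spec_U m \<inter> spec_U n"
    show "l \<in> {0, 1, -1}"
    proof (cases "l = 0")
      case True then show ?thesis by simp
    next
      case l0: False
      obtain L1 e1 where 1: "L1 \<ge> 1" "l^L1 = real (m^(L1*e1))" using key_real[OF assms(1) _ l0] l by blast
      obtain L2 e2 where 2: "L2 \<ge> 1" "l^L2 = real (n^(L2*e2))" using key_real[OF assms(2) _ l0] l by blast
      have a: "l^(L1*L2) = real (m^(L1*e1*L2))" by (simp only: power_mult 1(2) of_nat_power)
      have b: "l^(L2*L1) = real (n^(L2*e2*L1))" by (simp only: power_mult 2(2) of_nat_power)
      have "real (m^(L1*e1*L2)) = l^(L1*L2)" using a by simp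
      also have "\<dots> = l^(L2*L1)" by (simp add: mult.commute)
      also have "\<dots> = real (n^(L2*e2*L1))" using b by simp
      finally have eq: "m^(L1*e1*L2) = n^(L2*e2*L1)" by (simp only: of_nat_eq_iff)
      have "coprime (m^(L1*e1*L2)) (n^(L2*e2*L1))" using assms(3) by simp
      then have "coprime (m^(L1*e1*L2)) (m^(L1*e1*L2))" using eq by simp
      then have "m^(L1*e1*L2) = 1" by simp
      then have "L1*e1*L2 = 0" using assms(1) by (simp add: power_eq_1_iff)
      then have "e1 = 0" using 1(1) 2(1) by simp
      then have "l^L1 = 1" using 1 by simp
      then have "\<bar>l\<bar>^L1 = 1" by (simp add: power_abs[symmetric])
      then have "\<bar>l\<bar>^L1 = 1^L1" by simp
      then have "\<bar>l\<bar> = 1" by (rule power_eq_imp_eq_base) (use 1(1) in auto)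
      then show ?thesis by auto
    qed
  qed
qed

end
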